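(* Assume $\mathcal{Z}$ is norm-Euclidean. Then for every $m\ge1$, $\sigma(m):=\sup_{|s|=m}\operatorname{diam}C_s\le2\operatorname{rad}(K)^{2m+1}$; in particular $\sigma(m)\to0$ as $m\to\infty$.
   Context: $X=\mathbb{R}^d$ (including $\mathbb{C},\mathbb{H},\mathbb{O}$ as $\mathbb{R}^2,\mathbb{R}^4,\mathbb{R}^8$) with Euclidean norm and distance $d$. $\iota:X\setminus\{0\}\to X\setminus\{0\}$ satisfies $|\iota x|=1/|x|$, $d(\iota x,\iota y)=d(x,y)/(|x||y|)$ and $\iota\circ\iota=\mathrm{id}$; $\iota(0)=0$. $\mathcal{Z}$ is a discrete additive subgroup with compact quotient, $K=\{x:d(x,0)\le d(x,z)\ \forall z\in\mathcal{Z}\}$ its Dirichlet region with a boundary choice so each $x$ has a unique $[x]\in\mathcal{Z}$ with $x-[x]\in K$; $\operatorname{rad}(K)=\sup_{x\in K}|x|$, and norm-Euclidean means $\operatorname{rad}(K)<1$. $Tx=\iota x-[\iota x]$ ($x\ne0$), $T0=0$. Cylinders: $C_\emptyset=K$, $C_{as}=K\cap\iota(C_s+a)$ for $a\in\mathcal{Z}$; the supremum is over digit strings $s$ of length $m$ (with $\operatorname{diam}\emptyset=0$). *)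

theory Defs
  imports "HOL-Analysis.Analysis"
begin

text \<open>Dirichlet region of the additive subgroup Z (closed version, before boundary choice).\<close>
definition dirichlet :: "'a::euclidean_space set \<Rightarrow> 'a set" where
  "dirichlet Z = {x. \<forall>z\<in>Z. dist x 0 \<le> dist x z}"

definition rad :: "'a::euclidean_space set \<Rightarrow> real" where
  "rad K = Sup (norm ` K)"

fun cyl :: "('a::euclidean_space \<Rightarrow> 'a) \<Rightarrow> 'a set \<Rightarrow> 'a list \<Rightarrow> 'a set" where
  "cyl \<iota> K [] = K"
| "cyl \<iota> K (a # s) = K \<inter> \<iota> ` ((\<lambda>x. x + a) ` cyl \<iota> K s)"

definition sigma :: "('a::euclidean_space \<Rightarrow> 'a) \<Rightarrow> 'a set \<Rightarrow> 'a set \<Rightarrow> nat \<Rightarrow> real" where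
  "sigma \<iota> Z K m = Sup {diameter (cyl \<iota> K s) | s. set s \<subseteq> Z \<and> length s = m}"

end

theory Submission
  imports Defs
begin

lemma cyl_sub: "cyl \<iota> K s \<subseteq> K"
  by (cases s) auto

theorem lemma4p5:
  fixes \<iota> :: "'a::euclidean_space \<Rightarrow> 'a" and Z K :: "'a set"
  assumes inv_nz: "\<And>x. x \<noteq> 0 \<Longrightarrow> \<iota> x \<noteq> 0"
    and inv_norm: "\<And>x. x \<noteq> 0 \<Longrightarrow> norm (\<iota> x) = 1 / norm x"
    and inv_dist: "\<And>x y. x \<noteq> 0 \<Longrightarrow> y \<noteq> 0 \<Longrightarrow>
                      dist (\<iota> x) (\<iota> y) = dist x y / (norm x * norm y)"
    and inv_inv: "\<And>x. x \<noteq> 0 \<Longrightarrow> \<iota> (\<iota> x) = x"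
    and inv_0: "\<iota> 0 = 0"
    and Z_0: "0 \<in> Z"
    and Z_add: "\<And>x y. x \<in> Z \<Longrightarrow> y \<in> Z \<Longrightarrow> x + y \<in> Z"
    and Z_uminus: "\<And>x. x \<in> Z \<Longrightarrow> - x \<in> Z"
    and Z_discrete: "\<exists>e>0. \<forall>z\<in>Z. z \<noteq> 0 \<longrightarrow> e \<le> norm z"
    and Z_cocompact: "\<exists>C. compact C \<and> (\<forall>x. \<exists>z\<in>Z. x - z \<in> C)"
    and K_sub: "K \<subseteq> dirichlet Z"
    and K_sup: "interior (dirichlet Z) \<subseteq> K"
    and K_fund: "\<And>x. \<exists>!z. z \<in> Z \<and> x - z \<in> K"
    and norm_euclidean: "rad K < 1"
  shows "(\<forall>m\<ge>1. sigma \<iota> Z K m \<le> 2 * rad K ^ (2 * m + 1))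
         \<and> (sigma \<iota> Z K \<longlonglongrightarrow> 0)"
proof -
  define r where "r = rad K"
  have negK: "a = 0" if "a \<in> Z" "- a \<in> K" for a
  proof -
    have "- a \<in> dirichlet Z" using that K_sub by auto
    then have "dist (- a) 0 \<le> dist (- a) (- a)" using Z_uminus[OF that(1)]
      unfolding dirichlet_def by blast
    then show ?thesis by simp
  qed
  have K0: "0 \<in> K"
  proof -
    obtain z where "z \<in> Z" "0 - z \<in> K" using K_fund[of 0] by blast
    then have "z = 0" using negK[of z] by simp
    with \<open>0 - z \<in> K\<close> show ?thesis by simp
  qed
  obtain C where C: "compact C" "\<forall>x. \<exists>z\<in>Z. x - z \<in> C" using Z_cocompact by blast
  obtain R where R: "\<forall>c\<in>C. norm c \<le> R" using compact_imp_bounded[OF C(1)]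
    by (meson bounded_iff)
  have normK: "norm x \<le> R" if "x \<in> K" for x
  proof -
    obtain z where z: "z \<in> Z" "x - z \<in> C" using C(2) by blast
    have "dist x 0 \<le> dist x z" using that K_sub z(1) unfolding dirichlet_def by blast
    moreover have "norm (x - z) \<le> R" using R z(2) by blast
    ultimately show ?thesis by (simp add: dist_norm)
  qed
  have bddK: "bounded K" using normK by (meson bounded_iff)
  have normr: "norm x \<le> r" if "x \<in> K" for x
    unfolding r_def rad_def
    by (rule cSup_upper) (use that normK in \<open>auto intro!: bdd_aboveI2[where M=R]\<close>)
  have r0: "0 \<le> r" using normr[OF K0] by simp
  have r1: "r < 1" using norm_euclidean r_def by simp
  have cylcase: "(a = 0 \<and> x = 0) \<or> (x \<noteq> 0 \<and> \<iota> x - a \<in> cyl \<iota> K s)"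
    if a: "a \<in> Z" and x: "x \<in> cyl \<iota> K (a # s)" for a x s
  proof -
    from x obtain y where y: "y \<in> cyl \<iota> K s" "x = \<iota> (y + a)" "x \<in> K" by auto
    show ?thesis
    proof (cases "y + a = 0")
      case True
      then have "y = - a" by (simp add: add_eq_0_iff2)
      then have "a = 0" using negK a y(1) cyl_sub by blast
      then show ?thesis using True y inv_0 by auto
    next
      case False
      then have "x \<noteq> 0" using inv_nz y by auto
      moreover have "\<iota> x = y + a" using inv_inv[OF False] y by simp
      ultimately show ?thesis using y by auto
    qed
  qed
  have zero_case: "x = 0" if x: "x \<in> cyl \<iota> K (0 # s)" for x s
  proof (rule ccontr)
    assume nz: "x \<noteq> 0"
    from cylcase[OF Z_0 x] nz have "\<iota> x \<in> K" using cyl_sub by auto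
    then have "1 / norm x \<le> r" using normr inv_norm[OF nz] by metis
    moreover have "norm x \<le> r" using x normr by auto
    moreover have "norm x > 0" using nz by simp
    ultimately have "1 \<le> r * norm x"
      by (simp add: divide_le_eq mult.commute)
    also have "\<dots> \<le> r * r" using \<open>norm x \<le> r\<close> r0 by (rule mult_left_mono)
    also have "\<dots> \<le> r" using r0 r1 by (simp add: mult_left_le)
    also have "\<dots> < 1" by (rule r1)
    finally show False by simp
  qed
  have main: "\<forall>x\<in>cyl \<iota> K s. \<forall>x'\<in>cyl \<iota> K s. dist x x' \<le> 2 * r ^ (2 * length s + 1)"
    if "set s \<subseteq> Z" for s
    using that
  proof (induction s)
    case Nil
    show ?case
    proof (intro ballI)
      fix x x' assume "x \<in> cyl \<iota> K []" "x' \<in> cyl \<iota> K []"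
      then have "norm x \<le> r" "norm x' \<le> r" using normr by auto
      then show "dist x x' \<le> 2 * r ^ (2 * length [] + 1)"
        using norm_triangle_ineq4[of x x'] by (simp add: dist_norm)
    qed
  next
    case (Cons a s)
    have aZ: "a \<in> Z" and sZ: "set s \<subseteq> Z" using Cons.prems by auto
    note IH = Cons.IH[OF sZ]
    show ?case
    proof (intro ballI)
      fix x x' assume x: "x \<in> cyl \<iota> K (a # s)" and x': "x' \<in> cyl \<iota> K (a # s)"
      show "dist x x' \<le> 2 * r ^ (2 * length (a # s) + 1)"
      proof (cases "a = 0")
        case True
        then have "x = 0" "x' = 0" using zero_case x x' by auto
        then show ?thesis using r0 by simp
      next
        case False
        then have c: "x \<noteq> 0" "\<iota> x - a \<in> cyl \<iota> K s" "x' \<noteq> 0" "\<iota> x' - a \<in> cyl \<iota> K s"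
          using cylcase[OF aZ x] cylcase[OF aZ x'] by auto
        have d: "dist (\<iota> x) (\<iota> x') \<le> 2 * r ^ (2 * length s + 1)"
          proof -
          have "dist (\<iota> x - a) (\<iota> x' - a) \<le> 2 * r ^ (2 * length s + 1)" using IH c(2,4) by blast
          then show ?thesis by (simp add: dist_norm)
        qed
        have nx: "norm x \<le> r" "norm x' \<le> r" using x x' normr by auto
        have ix: "\<iota> x \<noteq> 0" "\<iota> x' \<noteq> 0" using inv_nz c by auto
        have "dist x x' = dist (\<iota> (\<iota> x)) (\<iota> (\<iota> x'))" using inv_inv c by simp
        also have "\<dots> = dist (\<iota> x) (\<iota> x') / (norm (\<iota> x) * norm (\<iota> x'))"
          using inv_dist ix by blast
        also have "\<dots> = dist (\<iota> x) (\<iota> x') * (norm x * norm x')"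
          using inv_norm c by simp
        also have "\<dots> \<le> 2 * r ^ (2 * length s + 1) * (r * r)"
          using d nx r0 by (intro mult_mono) (auto intro: mult_mono)
        also have "\<dots> = 2 * r ^ (2 * length (a # s) + 1)"
          by (simp add: power_add power2_eq_square)
        finally show ?thesis .
      qed
    qed
  qed
  have diam: "diameter (cyl \<iota> K s) \<le> 2 * r ^ (2 * length s + 1)" if "set s \<subseteq> Z" for s
    using main[OF that] r0 by (intro diameter_le) (auto simp: dist_norm)
  have nonneg: "0 \<le> diameter (cyl \<iota> K s)" for s
    using diameter_ge_0 bounded_subset[OF bddK cyl_sub] by blast
  have ne: "{diameter (cyl \<iota> K s) | s. set s \<subseteq> Z \<and> length s = m} \<noteq> {}" for m
    using Z_0 by (auto intro!: exI[of _ "replicate m 0"])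
  have sig_le: "sigma \<iota> Z K m \<le> 2 * r ^ (2 * m + 1)" for m
    unfolding sigma_def by (rule cSup_least[OF ne]) (use diam in auto)
  have sig_ge: "0 \<le> sigma \<iota> Z K m" for m
  proof -
    obtain d where d: "d \<in> {diameter (cyl \<iota> K s) | s. set s \<subseteq> Z \<and> length s = m}"
      using ne by blast
    have "d \<le> sigma \<iota> Z K m" unfolding sigma_def
      by (rule cSup_upper[OF d]) (use sig_le[unfolded sigma_def] diam in \<open>auto intro!: bdd_aboveI[where M="2 * r ^ (2 * m + 1)"]\<close>)
    moreover have "0 \<le> d" using d nonneg by auto
    ultimately show ?thesis by simp
  qed
  have rr: "r * r < 1"
  proof -
    have "r * r \<le> r" using r0 r1 by (simp add: mult_left_le)
    then show ?thesis using r1 by simp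
  qed
  have lim0: "(\<lambda>m. 2 * r ^ (2 * m + 1)) \<longlonglongrightarrow> 0"
  proof -
    have "(\<lambda>m. r ^ (2 * m + 1)) = (\<lambda>m. r * (r ^ 2) ^ m)"
      by (simp add: power_add power_mult)
    moreover have "(\<lambda>m. r * (r ^ 2) ^ m) \<longlonglongrightarrow> r * 0"
      using r0 r1 by (intro tendsto_mult tendsto_const LIMSEQ_power_zero)
        (use rr r0 in \<open>simp add: power2_eq_square\<close>)
    ultimately show ?thesis using tendsto_mult_right_zero by fastforce
  qed
  have "sigma \<iota> Z K \<longlonglongrightarrow> 0"
    by (rule tendsto_sandwich[OF _ _ tendsto_const lim0]) (use sig_ge sig_le in auto)
  then show ?thesis using sig_le r_def by auto
qed

end
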